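(* Let $K\subseteq\mathbb R^n$ ($n\ge1$) be a semialgebraic set with nonempty interior and let $d>2$ be even. Then there is no polynomial $\varphi$ in the coefficients of $f\in\mathbb R[x]_{\le d}$ with $\varphi(f)>0$ for all $f\in\operatorname{int}P_d(K)$ and $\varphi(f)=0$ for all $f\in\partial P_d(K)$. Consequently $-\log\varphi(f)$ cannot be a barrier for $P_d(K)$ with $\varphi$ polynomial, and $P_d(K)$ is not representable by a linear matrix inequality (no affine-linear symmetric matrix pencil $L(f)$ in the coefficients of $f$ with $P_d(K)=\{f:L(f)\succeq0\}$ and $L(f)\succ0$ on $\operatorname{int}P_d(K)$).
   Context: $\mathbb R[x]_{\le d}$: real polynomials in $x=(x_1,\dots,x_n)$ of degree $\le d$, with Euclidean topology on coefficients; $P_d(K)=\{f\in\mathbb R[x]_{\le d}: f(x)\ge0\ \forall x\in K\}$. *)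

theory Defs
  imports "HOL-Analysis.Analysis"
begin

inductive poly_fun :: "(('i \<Rightarrow> real) \<Rightarrow> real) \<Rightarrow> bool" where
  pf_const: "poly_fun (\<lambda>x. c)"
| pf_var:   "poly_fun (\<lambda>x. x i)"
| pf_add:   "poly_fun p \<Longrightarrow> poly_fun q \<Longrightarrow> poly_fun (\<lambda>x. p x + q x)"
| pf_mult:  "poly_fun p \<Longrightarrow> poly_fun q \<Longrightarrow> poly_fun (\<lambda>x. p x * q x)"

inductive semialgebraic :: "('i \<Rightarrow> real) set \<Rightarrow> bool" where
  sa_basic: "poly_fun p \<Longrightarrow> semialgebraic {x. 0 < p x}"
| sa_compl: "semialgebraic S \<Longrightarrow> semialgebraic (- S)"
| sa_union: "semialgebraic S \<Longrightarrow> semialgebraic T \<Longrightarrow> semialgebraic (S \<union> T)"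
| sa_inter: "semialgebraic S \<Longrightarrow> semialgebraic T \<Longrightarrow> semialgebraic (S \<inter> T)"

definition mons_le :: "nat \<Rightarrow> ('n::finite \<Rightarrow> nat) set" where
  "mons_le d = {\<alpha>. (\<Sum>i\<in>UNIV. \<alpha> i) \<le> d}"

text \<open>The coefficient space R[x]_{<= d}: coefficient functions supported on mons_le d.\<close>
definition polyspace :: "nat \<Rightarrow> (('n::finite \<Rightarrow> nat) \<Rightarrow> real) set" where
  "polyspace d = {c. \<forall>\<alpha>. \<alpha> \<notin> mons_le d \<longrightarrow> c \<alpha> = 0}"

definition peval :: "nat \<Rightarrow> (('n::finite \<Rightarrow> nat) \<Rightarrow> real) \<Rightarrow> ('n \<Rightarrow> real) \<Rightarrow> real" where
  "peval d c x = (\<Sum>\<alpha>\<in>mons_le d. c \<alpha> * (\<Prod>i\<in>UNIV. x i ^ \<alpha> i))"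

definition Pd :: "nat \<Rightarrow> ('n::finite \<Rightarrow> real) set \<Rightarrow> (('n \<Rightarrow> nat) \<Rightarrow> real) set" where
  "Pd d K = {c \<in> polyspace d. \<forall>x\<in>K. 0 \<le> peval d c x}"

definition intPd :: "nat \<Rightarrow> ('n::finite \<Rightarrow> real) set \<Rightarrow> (('n \<Rightarrow> nat) \<Rightarrow> real) set" where
  "intPd d K = (top_of_set (polyspace d)) interior_of (Pd d K)"

definition bdPd :: "nat \<Rightarrow> ('n::finite \<Rightarrow> real) set \<Rightarrow> (('n \<Rightarrow> nat) \<Rightarrow> real) set" where
  "bdPd d K = (top_of_set (polyspace d)) frontier_of (Pd d K)"

definition psd_mat :: "real^'m^'m \<Rightarrow> bool" where
  "psd_mat A \<longleftrightarrow> (\<forall>v. 0 \<le> v \<bullet> (A *v v))"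

definition pd_mat :: "real^'m^'m \<Rightarrow> bool" where
  "pd_mat A \<longleftrightarrow> (\<forall>v. v \<noteq> 0 \<longrightarrow> 0 < v \<bullet> (A *v v))"

end

theory Submission
  imports Defs "HOL-Computational_Algebra.Polynomial"
begin



definition ispoly :: "(real \<Rightarrow> real) \<Rightarrow> bool" where
  "ispoly g \<longleftrightarrow> (\<exists>P. \<forall>t. g t = poly P t)"

lemma ispoly_const[intro]: "ispoly (\<lambda>t. c)"
  unfolding ispoly_def by (rule exI[of _ "[:c:]"]) simp
lemma ispoly_id[intro]: "ispoly (\<lambda>t. t)"
  unfolding ispoly_def by (rule exI[of _ "[:0,1:]"]) simp
lemma ispoly_add[intro]: "ispoly f \<Longrightarrow> ispoly g \<Longrightarrow> ispoly (\<lambda>t. f t + g t)"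
  unfolding ispoly_def by (metis poly_add)
lemma ispoly_mult[intro]: "ispoly f \<Longrightarrow> ispoly g \<Longrightarrow> ispoly (\<lambda>t. f t * g t)"
  unfolding ispoly_def by (metis poly_mult)
lemma ispoly_minus[intro]: "ispoly f \<Longrightarrow> ispoly g \<Longrightarrow> ispoly (\<lambda>t. f t - g t)"
  unfolding ispoly_def by (metis poly_diff)
lemma ispoly_sum[intro]: "(\<And>a. a \<in> A \<Longrightarrow> ispoly (f a)) \<Longrightarrow> ispoly (\<lambda>t. \<Sum>a\<in>A. f a t)"
proof (induction A rule: infinite_finite_induct)
  case (insert x F) then show ?case by (simp add: ispoly_add)
qed auto
lemma ispoly_prod[intro]: "(\<And>a. a \<in> A \<Longrightarrow> ispoly (f a)) \<Longrightarrow> ispoly (\<lambda>t. \<Prod>a\<in>A. f a t)"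
proof (induction A rule: infinite_finite_induct)
  case (insert x F) then show ?case by (simp add: ispoly_mult)
qed auto

lemma ispoly_zero_on_infinite:
  assumes "ispoly g" "infinite S" "\<And>t. t \<in> S \<Longrightarrow> g t = 0"
  shows "g t = 0"
proof -
  obtain P where P: "\<And>t. g t = poly P t" using assms(1) unfolding ispoly_def by blast
  have "P = 0"
  proof (rule ccontr)
    assume "P \<noteq> 0"
    then have "finite {x. poly P x = 0}" by (rule poly_roots_finite)
    moreover have "S \<subseteq> {x. poly P x = 0}" using assms(3) P by auto
    ultimately show False using assms(2) finite_subset by blast
  qed
  then show ?thesis using P by simp
qed

lemma polyfun_curve:
  assumes "poly_fun \<phi>" "\<And>\<alpha>. ispoly (\<lambda>t. c t \<alpha>)"
  shows "ispoly (\<lambda>t. \<phi> (c t))"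
  using assms(1)
proof induction
  case (pf_var i) then show ?case using assms(2) by simp
qed auto

definition mon :: "('n::finite \<Rightarrow> nat) \<Rightarrow> ('n \<Rightarrow> real) \<Rightarrow> real" where
  "mon \<alpha> x = (\<Prod>i\<in>UNIV. x i ^ \<alpha> i)"

lemma peval_mon: "peval d c x = (\<Sum>\<alpha>\<in>mons_le d. c \<alpha> * mon \<alpha> x)"
  unfolding peval_def mon_def ..

lemma finite_mons[simp]: "finite (mons_le d :: ('n::finite \<Rightarrow> nat) set)"
proof -
  have "mons_le d \<subseteq> PiE UNIV (\<lambda>_::'n. {..d})"
  proof
    fix \<alpha> :: "'n \<Rightarrow> nat" assume "\<alpha> \<in> mons_le d"
    then have "(\<Sum>i\<in>UNIV. \<alpha> i) \<le> d" by (simp add: mons_le_def)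
    moreover have "\<alpha> i \<le> (\<Sum>i\<in>UNIV. \<alpha> i)" for i by (rule member_le_sum) auto
    ultimately show "\<alpha> \<in> PiE UNIV (\<lambda>_::'n. {..d})" by (auto simp: PiE_iff intro: le_trans)
  qed
  then show ?thesis by (rule finite_subset) (simp add: finite_PiE)
qed

lemma zero_mons[simp]: "(\<lambda>_. 0) \<in> mons_le d"
  by (simp add: mons_le_def)

lemma mon_zero[simp]: "mon (\<lambda>_. 0) x = 1"
  by (simp add: mon_def)

lemma sum_single_pt:
  assumes "finite A" "a \<in> A" "\<And>b. b \<in> A \<Longrightarrow> b \<noteq> a \<Longrightarrow> f b = 0"
  shows "sum f A = f a"
proof -
  have "sum f A = f a + sum f (A - {a})" using assms(1,2) by (simp add: sum.remove)
  also have "sum f (A - {a}) = 0" using assms(3) by (intro sum.neutral) auto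
  finally show ?thesis by simp
qed

definition rep :: "nat \<Rightarrow> (real \<Rightarrow> ('n::finite \<Rightarrow> real) \<Rightarrow> real) \<Rightarrow> bool" where
  "rep d F \<longleftrightarrow> (\<exists>c. (\<forall>t \<alpha>. \<alpha> \<notin> mons_le d \<longrightarrow> c t \<alpha> = 0) \<and> (\<forall>\<alpha>. ispoly (\<lambda>t. c t \<alpha>))
      \<and> (\<forall>t x. F t x = (\<Sum>\<alpha>\<in>mons_le d. c t \<alpha> * mon \<alpha> x)))"

lemma rep_const:
  assumes "ispoly g" shows "rep d (\<lambda>t x. g t)"
  unfolding rep_def
proof (intro exI conjI allI impI)
  let ?c = "\<lambda>t \<alpha>. if \<alpha> = (\<lambda>_. 0) then g t else 0"
  show "\<alpha> \<notin> mons_le d \<Longrightarrow> ?c t \<alpha> = 0" for t \<alpha> by auto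
  show "ispoly (\<lambda>t. ?c t \<alpha>)" for \<alpha> using assms by (cases "\<alpha> = (\<lambda>_. 0)") auto
  show "g t = (\<Sum>\<alpha>\<in>mons_le d. ?c t \<alpha> * mon \<alpha> x)" for t x
    by (subst sum_single_pt[where a="\<lambda>_. 0"]) auto
qed

lemma rep_var:
  assumes "1 \<le> d" shows "rep d (\<lambda>t x. x i)"
  unfolding rep_def
proof (intro exI conjI allI impI)
  let ?e = "\<lambda>j. if j = i then 1 else (0::nat)"
  let ?c = "\<lambda>(t::real) \<alpha>. if \<alpha> = ?e then 1 else (0::real)"
  have em: "?e \<in> mons_le d" using assms by (simp add: mons_le_def)
  show "\<alpha> \<notin> mons_le d \<Longrightarrow> ?c t \<alpha> = 0" for t \<alpha> using em by auto
  show "ispoly (\<lambda>t. ?c t \<alpha>)" for \<alpha> by auto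
  have "mon ?e x = x i" for x unfolding mon_def
    by (subst prod.remove[of _ i]) (auto intro!: prod.neutral)
  then show "x i = (\<Sum>\<alpha>\<in>mons_le d. ?c t \<alpha> * mon \<alpha> x)" for t x
    using em by (subst sum_single_pt[where a="?e"]) auto
qed

lemma rep_add:
  assumes "rep d F" "rep d G" shows "rep d (\<lambda>t x. F t x + G t x)"
proof -
  obtain c where c: "\<forall>t \<alpha>. \<alpha> \<notin> mons_le d \<longrightarrow> c t \<alpha> = 0" "\<forall>\<alpha>. ispoly (\<lambda>t. c t \<alpha>)"
      "\<forall>t x. F t x = (\<Sum>\<alpha>\<in>mons_le d. c t \<alpha> * mon \<alpha> x)" using assms(1) unfolding rep_def by blast
  obtain e where e: "\<forall>t \<alpha>. \<alpha> \<notin> mons_le d \<longrightarrow> e t \<alpha> = 0" "\<forall>\<alpha>. ispoly (\<lambda>t. e t \<alpha>)"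
      "\<forall>t x. G t x = (\<Sum>\<alpha>\<in>mons_le d. e t \<alpha> * mon \<alpha> x)" using assms(2) unfolding rep_def by blast
  show ?thesis unfolding rep_def
    by (rule exI[of _ "\<lambda>t \<alpha>. c t \<alpha> + e t \<alpha>"]) 
       (use c e in \<open>auto simp: distrib_right sum.distrib\<close>)
qed

lemma rep_mono:
  assumes "rep d F" "d \<le> d'" shows "rep d' F"
proof -
  obtain c where c: "\<forall>t \<alpha>. \<alpha> \<notin> mons_le d \<longrightarrow> c t \<alpha> = 0" "\<forall>\<alpha>. ispoly (\<lambda>t. c t \<alpha>)"
      "\<forall>t x. F t x = (\<Sum>\<alpha>\<in>mons_le d. c t \<alpha> * mon \<alpha> x)" using assms(1) unfolding rep_def by blast
  have sub: "mons_le d \<subseteq> mons_le d'" using assms(2) by (auto simp: mons_le_def)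
  have "F t x = (\<Sum>\<alpha>\<in>mons_le d'. c t \<alpha> * mon \<alpha> x)" for t x
    using c(1,3) by (auto intro!: sum.mono_neutral_left sub)
  then show ?thesis unfolding rep_def using c(1,2) sub by blast
qed


lemma mon_add: "mon (\<lambda>i. \<alpha> i + \<beta> i) x = mon \<alpha> x * mon \<beta> x"
  unfolding mon_def by (simp add: power_add prod.distrib)

lemma mons_add: "\<alpha> \<in> mons_le d1 \<Longrightarrow> \<beta> \<in> mons_le d2 \<Longrightarrow> (\<lambda>i. \<alpha> i + \<beta> i) \<in> mons_le (d1 + d2)"
  by (simp add: mons_le_def sum.distrib add_mono)

lemma rep_mult:
  assumes "rep d1 F" "rep d2 G" shows "rep (d1 + d2) (\<lambda>t x. F t x * G t x)"
proof -
  obtain c where c: "\<forall>t \<alpha>. \<alpha> \<notin> mons_le d1 \<longrightarrow> c t \<alpha> = 0" "\<forall>\<alpha>. ispoly (\<lambda>t. c t \<alpha>)"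
      "\<forall>t x. F t x = (\<Sum>\<alpha>\<in>mons_le d1. c t \<alpha> * mon \<alpha> x)" using assms(1) unfolding rep_def by blast
  obtain e where e: "\<forall>t \<alpha>. \<alpha> \<notin> mons_le d2 \<longrightarrow> e t \<alpha> = 0" "\<forall>\<alpha>. ispoly (\<lambda>t. e t \<alpha>)"
      "\<forall>t x. G t x = (\<Sum>\<alpha>\<in>mons_le d2. e t \<alpha> * mon \<alpha> x)" using assms(2) unfolding rep_def by blast
  define h where "h t \<gamma> = (\<Sum>\<alpha>\<in>mons_le d1. \<Sum>\<beta>\<in>mons_le d2.
      if (\<lambda>i. \<alpha> i + \<beta> i) = \<gamma> then c t \<alpha> * e t \<beta> else 0)" for t \<gamma>
  have h1: "h t \<gamma> = 0" if "\<gamma> \<notin> mons_le (d1 + d2)" for t \<gamma>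
    unfolding h_def using that mons_add[of _ d1 _ d2] by (intro sum.neutral ballI) auto
  have h2: "ispoly (\<lambda>t. h t \<gamma>)" for \<gamma>
    unfolding h_def
  proof (intro ispoly_sum)
    fix \<alpha> \<beta> show "ispoly (\<lambda>t. if (\<lambda>i. \<alpha> i + \<beta> i) = \<gamma> then c t \<alpha> * e t \<beta> else 0)"
      using c(2) e(2) by (cases "(\<lambda>i. \<alpha> i + \<beta> i) = \<gamma>") auto
  qed
  have h3: "F t x * G t x = (\<Sum>\<gamma>\<in>mons_le (d1+d2). h t \<gamma> * mon \<gamma> x)" for t x
  proof -
    have "(\<Sum>\<gamma>\<in>mons_le (d1+d2). h t \<gamma> * mon \<gamma> x) =
       (\<Sum>\<gamma>\<in>mons_le (d1+d2). \<Sum>\<alpha>\<in>mons_le d1. \<Sum>\<beta>\<in>mons_le d2.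
          if (\<lambda>i. \<alpha> i + \<beta> i) = \<gamma> then c t \<alpha> * e t \<beta> * mon \<gamma> x else 0)"
      unfolding h_def sum_distrib_right by (intro sum.cong refl) auto
    also have "\<dots> = (\<Sum>\<alpha>\<in>mons_le d1. \<Sum>\<beta>\<in>mons_le d2. \<Sum>\<gamma>\<in>mons_le (d1+d2).
          if (\<lambda>i. \<alpha> i + \<beta> i) = \<gamma> then c t \<alpha> * e t \<beta> * mon \<gamma> x else 0)"
      by (subst sum.swap) (simp add: sum.swap[of _ "mons_le (d1+d2)"])
    also have "\<dots> = (\<Sum>\<alpha>\<in>mons_le d1. \<Sum>\<beta>\<in>mons_le d2. c t \<alpha> * e t \<beta> * mon (\<lambda>i. \<alpha> i + \<beta> i) x)"
      by (intro sum.cong refl, subst sum_single_pt[where a="\<lambda>i. _ i + _ i"]) (auto intro: mons_add)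
    also have "\<dots> = F t x * G t x"
      using c(3) e(3) by (simp add: mon_add sum_product mult_ac)
    finally show ?thesis by simp
  qed
  show ?thesis unfolding rep_def using h1 h2 h3 by blast
qed

lemma rep_sum:
  assumes "finite I" "\<And>i. i \<in> I \<Longrightarrow> rep d (F i)" shows "rep d (\<lambda>t x. \<Sum>i\<in>I. F i t x)"
  using assms
proof (induction I rule: finite_induct)
  case empty then show ?case using rep_const[of "\<lambda>_. 0"] by auto
next
  case (insert a I) then show ?case by (simp add: rep_add)
qed

lemma rep_pow:
  assumes "rep d F" shows "rep (d * k) (\<lambda>t x. F t x ^ k)"
proof (induction k)
  case 0 then show ?case using rep_const[of "\<lambda>_. 1"] by auto
next
  case (Suc k)
  from rep_mult[OF assms Suc] show ?case by (simp add: algebra_simps)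
qed




definition Sd :: "('n::finite \<Rightarrow> real) \<Rightarrow> ('n \<Rightarrow> real) \<Rightarrow> real" where
  "Sd p x = (\<Sum>i\<in>UNIV. (x i - p i)^2)"

definition Bp :: "('n::finite \<Rightarrow> real) \<Rightarrow> real" where
  "Bp p = 2 * (1 + (\<Sum>j\<in>UNIV. (p j)^2))"

lemma Sd_nonneg: "0 \<le> Sd p x" unfolding Sd_def by (intro sum_nonneg) auto

lemma Bp_ge: "2 \<le> Bp p" unfolding Bp_def
  using sum_nonneg[of UNIV "\<lambda>j. (p j)^2"] by auto

lemma coord_bound: "(x i)^2 \<le> Bp p * (1 + Sd p x)"
proof -
  have a: "(x i - p i)^2 \<le> Sd p x" unfolding Sd_def by (rule member_le_sum) auto
  have b: "(p i)^2 \<le> (\<Sum>j\<in>UNIV. (p j)^2)" by (rule member_le_sum) auto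
  have e: "2 * (x i - p i)^2 + 2 * (p i)^2 - (x i)^2 = (x i - 2 * p i)^2"
    by (simp add: power2_eq_square algebra_simps)
  have c: "(x i)^2 \<le> 2 * (x i - p i)^2 + 2 * (p i)^2"
    using e zero_le_power2[of "x i - 2 * p i"] by linarith
  have "0 \<le> (\<Sum>j\<in>UNIV. (p j)^2) * Sd p x" using Sd_nonneg by (intro mult_nonneg_nonneg sum_nonneg) auto
  then show ?thesis using a b c unfolding Bp_def by (simp add: algebra_simps)
qed

lemma mon_bound:
  assumes "\<alpha> \<in> mons_le d" "d = 2 * D"
  shows "\<bar>mon \<alpha> x\<bar> \<le> Bp p ^ D * (1 + Sd p x) ^ D"
proof -
  let ?W = "Bp p * (1 + Sd p x)"
  have "2 * 1 \<le> ?W" using Bp_ge[of p] Sd_nonneg[of p x] by (intro mult_mono) auto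
  then have W1: "1 \<le> ?W" by simp
  have "(mon \<alpha> x)^2 = (\<Prod>i\<in>UNIV. ((x i)^2) ^ \<alpha> i)"
    unfolding mon_def prod_power_distrib by (rule prod.cong) (simp_all, metis power_mult mult.commute)
  also have "\<dots> \<le> (\<Prod>i\<in>UNIV. ?W ^ \<alpha> i)"
    by (intro prod_mono conjI power_mono coord_bound) auto
  also have "\<dots> = ?W ^ (\<Sum>i\<in>UNIV. \<alpha> i)" by (simp add: power_sum)
  also have "\<dots> \<le> ?W ^ d" using assms(1) W1 by (intro power_increasing) (auto simp: mons_le_def)
  also have "\<dots> = (Bp p ^ D * (1 + Sd p x) ^ D)^2"
    using assms(2) by (simp add: power_mult power_mult_distrib mult.commute)
  finally show ?thesis
    using abs_le_square_iff[of "mon \<alpha> x" "Bp p ^ D * (1 + Sd p x) ^ D"]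
    Bp_ge[of p] Sd_nonneg[of p x] by (simp add: abs_of_nonneg)
qed

lemma intPd_crit:
  fixes c :: "('n::finite \<Rightarrow> nat) \<Rightarrow> real"
  assumes "c \<in> polyspace d" "\<epsilon> > 0"
    and "\<And>g. g \<in> polyspace d \<Longrightarrow> (\<forall>\<alpha>\<in>mons_le d. \<bar>g \<alpha> - c \<alpha>\<bar> < \<epsilon>) \<Longrightarrow> g \<in> Pd d K"
  shows "c \<in> intPd d K"
proof -
  define T where "T = {g::('n\<Rightarrow>nat)\<Rightarrow>real. \<forall>\<alpha>\<in>mons_le d. g (id \<alpha>) \<in> {y. \<bar>y - c \<alpha>\<bar> < \<epsilon>}}"
  have "open T" unfolding T_def
  proof (rule product_topology_basis')
    show "open {y. \<bar>y - c \<alpha>\<bar> < \<epsilon>}" for \<alpha>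
      using open_ball[of "c \<alpha>" \<epsilon>] by (simp add: ball_def dist_real_def abs_minus_commute)
  qed simp
  then have "openin (top_of_set (polyspace d)) (polyspace d \<inter> T)" by auto
  moreover have "c \<in> polyspace d \<inter> T" using assms(1,2) by (auto simp: T_def)
  moreover have "polyspace d \<inter> T \<subseteq> Pd d K" using assms(3) by (auto simp: T_def)
  ultimately show ?thesis unfolding intPd_def interior_of_def by blast
qed

lemma peval_diff: "peval d g x = peval d c x + (\<Sum>\<alpha>\<in>mons_le d. (g \<alpha> - c \<alpha>) * mon \<alpha> x)"
  unfolding peval_mon by (simp add: sum.distrib[symmetric] algebra_simps)

lemma intPd_growth:
  fixes c :: "('n::finite \<Rightarrow> nat) \<Rightarrow> real"
  assumes "even d" "c \<in> polyspace d" "m > 0" "\<And>x. m * (1 + Sd p x) ^ (d div 2) \<le> peval d c x"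
  shows "c \<in> intPd d K"
proof -
  define D where "D = d div 2"
  have dD: "d = 2 * D" using assms(1) by (simp add: D_def)
  define N where "N = real (card (mons_le d :: ('n\<Rightarrow>nat) set))"
  define \<epsilon> where "\<epsilon> = m / (N * Bp p ^ D + 1)"
  have Bpos: "0 < Bp p ^ D" using Bp_ge[of p] by simp
  have NB: "0 \<le> N * Bp p ^ D" using Bpos by (simp add: N_def)
  have epos: "\<epsilon> > 0" using assms(3) NB by (simp add: \<epsilon>_def)
  have key: "N * \<epsilon> * Bp p ^ D \<le> m"
  proof -
    have "N * \<epsilon> * Bp p ^ D = m * (N * Bp p ^ D) / (N * Bp p ^ D + 1)" by (simp add: \<epsilon>_def)
    also have "\<dots> \<le> m" using NB assms(3) by (simp add: divide_le_eq)
    finally show ?thesis .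
  qed
  show ?thesis
  proof (rule intPd_crit[OF assms(2) epos])
    fix g assume g: "g \<in> polyspace d" "\<forall>\<alpha>\<in>mons_le d. \<bar>g \<alpha> - c \<alpha>\<bar> < \<epsilon>"
    have "0 \<le> peval d g x" for x
    proof -
      let ?W = "(1 + Sd p x) ^ D"
      have W0: "0 \<le> ?W" using Sd_nonneg[of p x] by simp
      have "\<bar>\<Sum>\<alpha>\<in>mons_le d. (g \<alpha> - c \<alpha>) * mon \<alpha> x\<bar> \<le> (\<Sum>\<alpha>\<in>mons_le d. \<bar>(g \<alpha> - c \<alpha>) * mon \<alpha> x\<bar>)"
        by (rule sum_abs)
      also have "\<dots> \<le> (\<Sum>\<alpha>\<in>(mons_le d :: ('n\<Rightarrow>nat) set). \<epsilon> * (Bp p ^ D * ?W))"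
      proof (intro sum_mono)
        fix \<alpha> :: "'n \<Rightarrow> nat" assume a: "\<alpha> \<in> mons_le d"
        show "\<bar>(g \<alpha> - c \<alpha>) * mon \<alpha> x\<bar> \<le> \<epsilon> * (Bp p ^ D * ?W)"
          unfolding abs_mult using g(2) a mon_bound[OF a dD, of x p]
          by (intro mult_mono) auto
      qed
      also have "\<dots> = N * \<epsilon> * Bp p ^ D * ?W" by (simp add: N_def)
      also have "\<dots> \<le> m * ?W" using key W0 by (rule mult_right_mono)
      finally have "\<bar>\<Sum>\<alpha>\<in>mons_le d. (g \<alpha> - c \<alpha>) * mon \<alpha> x\<bar> \<le> m * ?W" .
      moreover have "m * ?W \<le> peval d c x" using assms(4) by (simp add: D_def)
      ultimately show ?thesis unfolding peval_diff[of d g x c] by linarith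
    qed
    then show "g \<in> Pd d K" using g(1) by (simp add: Pd_def)
  qed
qed




lemma peval_zero_at: "peval d c x - s = peval d (\<lambda>\<alpha>. if \<alpha> = (\<lambda>_. 0) then c \<alpha> - s else c \<alpha>) x"
proof -
  have "peval d (\<lambda>\<alpha>. if \<alpha> = (\<lambda>_. 0) then c \<alpha> - s else c \<alpha>) x = peval d c x +
     (\<Sum>\<alpha>\<in>mons_le d. ((if \<alpha> = (\<lambda>_. 0) then c \<alpha> - s else c \<alpha>) - c \<alpha>) * mon \<alpha> x)"
    by (rule peval_diff)
  also have "(\<Sum>\<alpha>\<in>mons_le d. ((if \<alpha> = (\<lambda>_. 0) then c \<alpha> - s else c \<alpha>) - c \<alpha>) * mon \<alpha> x) = - s"
    by (subst sum_single_pt[where a="\<lambda>_. 0"]) auto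
  finally show ?thesis by simp
qed

lemma bdPd_crit:
  fixes c :: "('n::finite \<Rightarrow> nat) \<Rightarrow> real"
  assumes "c \<in> Pd d K" "z \<in> K" "peval d c z = 0"
  shows "c \<in> bdPd d K"
proof -
  have sub: "Pd d K \<subseteq> polyspace d" by (auto simp: Pd_def)
  have cl: "c \<in> top_of_set (polyspace d) closure_of Pd d K"
    using closure_of_subset[of "Pd d K" "top_of_set (polyspace d)"] sub assms(1) by auto
  have ni: "c \<notin> top_of_set (polyspace d) interior_of Pd d K"
  proof
    assume "c \<in> top_of_set (polyspace d) interior_of Pd d K"
    then obtain U where U: "openin (top_of_set (polyspace d)) U" "c \<in> U" "U \<subseteq> Pd d K"
      unfolding interior_of_def by blast
    from U(1) obtain T where T: "open T" "U = polyspace d \<inter> T"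
      unfolding openin_open by blast
    define h where "h s = (\<lambda>\<alpha>. if \<alpha> = (\<lambda>_. 0) then c \<alpha> - s else c \<alpha>)" for s :: real
    have "continuous_on UNIV h" unfolding h_def
    proof (intro continuous_on_coordinatewise_then_product)
      fix j :: "'n \<Rightarrow> nat" show "continuous_on UNIV (\<lambda>x. if j = (\<lambda>_. 0) then c j - x else c j)"
        by (cases "j = (\<lambda>_. 0)") (auto intro!: continuous_intros)
    qed
    then have "open (h -` T)" using T(1) continuous_on_open_vimage[of UNIV h] by auto
    moreover have "h 0 = c" by (rule ext) (simp add: h_def)
    then have "0 \<in> h -` T" using U T by auto
    ultimately have "\<exists>e>0. ball 0 e \<subseteq> h -` T" using open_contains_ball[of "h -` T"] by blast
    then obtain e where e: "e > 0" "ball 0 e \<subseteq> h -` T" by blast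
    have "e/2 \<in> ball 0 e" using e(1) by simp
    then have "h (e/2) \<in> T" using e(2) by blast
    moreover have "h (e/2) \<in> polyspace d" using U sub unfolding h_def polyspace_def by auto
    ultimately have "h (e/2) \<in> Pd d K" using U T by auto
    then have "0 \<le> peval d (h (e/2)) z" using assms(2) by (auto simp: Pd_def)
    moreover have "peval d (h (e/2)) z = - (e/2)"
      using peval_zero_at[of d c z "e/2"] assms(3) by (simp add: h_def)
    ultimately show False using e(1) by simp
  qed
  show ?thesis using cl ni unfolding bdPd_def frontier_of_def by blast
qed

lemma rep_peval:
  assumes "rep d F"
  obtains c where "\<And>t. c t \<in> polyspace d" "\<And>\<alpha>. ispoly (\<lambda>t. c t \<alpha>)" "\<And>t x. peval d (c t) x = F t x"
proof -
  obtain c where c: "\<forall>t \<alpha>. \<alpha> \<notin> mons_le d \<longrightarrow> c t \<alpha> = 0" "\<forall>\<alpha>. ispoly (\<lambda>t. c t \<alpha>)"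
      "\<forall>t x. F t x = (\<Sum>\<alpha>\<in>mons_le d. c t \<alpha> * mon \<alpha> x)" using assms unfolding rep_def by blast
  show thesis by (rule that[of c]) (use c in \<open>auto simp: polyspace_def peval_mon\<close>)
qed

lemma curve:
  fixes p :: "'n::finite \<Rightarrow> real"
  assumes "even d" "4 \<le> d"
  obtains c where "\<And>t. c t \<in> polyspace d" "\<And>\<alpha>. ispoly (\<lambda>t. c t \<alpha>)"
    "\<And>t x. peval d (c t) x = (Sd p x - t)^2 * (1 + Sd p x)^(d div 2 - 2)"
proof -
  have r0: "rep 1 (\<lambda>t (x::'n\<Rightarrow>real). x i - p i)" for i
    using rep_add[OF rep_var[of 1 i] rep_const[OF ispoly_const[where c="- p i"]]] by simp
  have r1: "rep 2 (\<lambda>t (x::'n\<Rightarrow>real). (x i - p i)^2)" for i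
    using rep_pow[OF r0, of 2] by simp
  have r2: "rep 2 (\<lambda>t (x::'n\<Rightarrow>real). Sd p x)"
    unfolding Sd_def by (rule rep_sum) (auto intro: r1)
  have r3: "rep 2 (\<lambda>t (x::'n\<Rightarrow>real). Sd p x - t)"
    using rep_add[OF r2 rep_const[OF ispoly_minus[OF ispoly_const[where c=0] ispoly_id]]] by simp
  have r4: "rep 4 (\<lambda>t (x::'n\<Rightarrow>real). (Sd p x - t)^2)"
    using rep_pow[OF r3, of 2] by simp
  have r5: "rep 2 (\<lambda>t (x::'n\<Rightarrow>real). 1 + Sd p x)"
    using rep_add[OF rep_const[OF ispoly_const[where c=1]] r2] by auto
  have r6: "rep (2 * (d div 2 - 2)) (\<lambda>t (x::'n\<Rightarrow>real). (1 + Sd p x)^(d div 2 - 2))"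
    by (rule rep_pow[OF r5])
  have "4 + 2 * (d div 2 - 2) = d" using assms by (auto elim!: evenE)
  then have "rep d (\<lambda>t (x::'n\<Rightarrow>real). (Sd p x - t)^2 * (1 + Sd p x)^(d div 2 - 2))"
    using rep_mult[OF r4 r6] by simp
  then show ?thesis using that by (rule rep_peval) 
qed

lemma interior_line:
  fixes K :: "('n::finite \<Rightarrow> real) set"
  assumes "p \<in> interior K"
  obtains \<delta> where "\<delta> > 0" "\<And>s. \<bar>s\<bar> < \<delta> \<Longrightarrow> p(i := p i + s) \<in> K"
proof -
  obtain U where U: "open U" "p \<in> U" "U \<subseteq> K" using assms by (meson interiorE)
  define h where "h s = p(i := p i + s)" for s :: real
  have "continuous_on UNIV h" unfolding h_def
  proof (intro continuous_on_coordinatewise_then_product)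
    fix j show "continuous_on UNIV (\<lambda>x. (p(i := p i + x)) j)"
      by (cases "j = i") (auto intro!: continuous_intros)
  qed
  then have "open (h -` U)" using U(1) continuous_on_open_vimage[of UNIV h] by auto
  moreover have "0 \<in> h -` U" using U by (auto simp: h_def)
  ultimately have "\<exists>e>0. ball 0 e \<subseteq> h -` U" using open_contains_ball[of "h -` U"] by blast
    then obtain e where e: "e > 0" "ball 0 e \<subseteq> h -` U" by blast
  show ?thesis
  proof (rule that[OF e(1)])
    fix s :: real assume "\<bar>s\<bar> < e" then have "s \<in> ball 0 e" by (simp add: dist_real_def)
    then have "h s \<in> U" using e(2) by blast
    then show "p(i := p i + s) \<in> K" using U(3) by (auto simp: h_def)
  qed
qed

lemma Sd_line: "Sd p (p(i := p i + s)) = s^2"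
  unfolding Sd_def by (subst sum_single_pt[where a=i]) auto




lemma sum_scaleR_mv: "(\<Sum>a\<in>S. f a *\<^sub>R (B a :: real^'m::finite^'m)) *v v = (\<Sum>a\<in>S. f a *\<^sub>R (B a *v v))"
proof (induction S rule: infinite_finite_induct)
  case (insert x F) then show ?case
    by (simp add: matrix_vector_mult_add_rdistrib scaleR_matrix_vector_assoc)
qed auto

lemma quad_L:
  fixes A0 :: "real^'m::finite^'m"
  shows "v \<bullet> ((A0 + (\<Sum>\<alpha>\<in>S. g \<alpha> *\<^sub>R A \<alpha>)) *v v) = v \<bullet> (A0 *v v) + (\<Sum>\<alpha>\<in>S. g \<alpha> * (v \<bullet> (A \<alpha> *v v)))"
  by (simp add: matrix_vector_mult_add_rdistrib sum_scaleR_mv inner_add_right inner_sum_right)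

lemma entry_L:
  fixes A0 :: "real^'m::finite^'m"
  shows "(A0 + (\<Sum>\<alpha>\<in>S. g \<alpha> *\<^sub>R A \<alpha>)) $ i $ j = A0 $ i $ j + (\<Sum>\<alpha>\<in>S. g \<alpha> * A \<alpha> $ i $ j)"
  by (simp add: sum_component)

lemma tcomp: "transpose A $ i $ j = A $ j $ i"
  by (simp add: transpose_def)

lemma sym_L:
  fixes A0 :: "real^'m::finite^'m"
  assumes "transpose A0 = A0" "\<forall>\<alpha>\<in>S. transpose (A \<alpha>) = A \<alpha>"
  shows "transpose (A0 + (\<Sum>\<alpha>\<in>S. g \<alpha> *\<^sub>R A \<alpha>)) = A0 + (\<Sum>\<alpha>\<in>S. g \<alpha> *\<^sub>R A \<alpha>)"
proof -
  have s0: "A0 $ j $ i = A0 $ i $ j" for i j using assms(1) by (metis tcomp)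
  have s1: "A \<alpha> $ j $ i = A \<alpha> $ i $ j" if "\<alpha> \<in> S" for i j \<alpha> using assms(2) that by (metis tcomp)
  show ?thesis unfolding vec_eq_iff tcomp entry_L
    using s0 s1 by (auto intro!: sum.cong)
qed

lemma sym_inner:
  fixes M :: "real^'m::finite^'m"
  assumes "transpose M = M"
  shows "u \<bullet> (M *v w) = w \<bullet> (M *v u)"
proof -
  have "u \<bullet> (M *v w) = (u v* M) \<bullet> w" by (simp add: dot_lmul_matrix)
  also have "u v* M = M *v u" by (metis assms vector_transpose_matrix)
  finally show ?thesis by (simp add: inner_commute)
qed

lemma psd_kernel:
  fixes M :: "real^'m::finite^'m"
  assumes "transpose M = M" "psd_mat M" "v \<bullet> (M *v v) = 0"
  shows "M *v v = 0"
proof -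
  define w where "w = M *v v"
  define a where "a = w \<bullet> w"
  define b where "b = w \<bullet> (M *v w)"
  have b0: "0 \<le> b" using assms(2) by (simp add: psd_mat_def b_def)
  have exp: "(v + s *\<^sub>R w) \<bullet> (M *v (v + s *\<^sub>R w)) = 2 * s * a + s^2 * b" for s
  proof -
    have "(v + s *\<^sub>R w) \<bullet> (M *v (v + s *\<^sub>R w)) =
      v \<bullet> (M *v v) + s * (v \<bullet> (M *v w)) + s * (w \<bullet> (M *v v)) + s * s * (w \<bullet> (M *v w))"
      by (simp add: matrix_vector_right_distrib matrix_vector_mult_scaleR inner_add_left inner_add_right algebra_simps)
    also have "v \<bullet> (M *v w) = w \<bullet> (M *v v)" by (rule sym_inner[OF assms(1)])
    finally show ?thesis using assms(3) by (simp add: a_def b_def w_def power2_eq_square algebra_simps)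
  qed
  define s where "s = - a / (b + 2)"
  have sq: "s * (b + 2) = - a" using b0 by (simp add: s_def)
  have e1: "(b+2)^2 * (2 * s * a + s^2 * b) = 2 * (s * (b+2)) * a * (b+2) + (s * (b+2))^2 * b"
    by (simp add: power2_eq_square algebra_simps)
  have e2: "2 * (s * (b+2)) * a * (b+2) + (s * (b+2))^2 * b = - (a^2 * (b + 4))"
    unfolding sq by (simp add: power2_eq_square algebra_simps)
  have "0 \<le> (v + s *\<^sub>R w) \<bullet> (M *v (v + s *\<^sub>R w))" using assms(2) unfolding psd_mat_def by blast
  then have "0 \<le> 2 * s * a + s^2 * b" using exp[of s] by simp
  then have "0 \<le> (b+2)^2 * (2 * s * a + s^2 * b)" by simp
  then have "0 \<le> - (a^2 * (b + 4))" using e1 e2 by simp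
  then have "a^2 * (b + 4) \<le> 0" by simp
  then have "a^2 \<le> 0" using b0 by (simp add: mult_le_0_iff)
  then have "a = 0" by simp
  then show ?thesis by (simp add: a_def w_def)
qed

lemma det_zero_kernel:
  fixes M :: "real^'m::finite^'m"
  assumes "M *v v = 0" "v \<noteq> 0"
  shows "det M = 0"
proof (rule ccontr)
  assume "det M \<noteq> 0"
  then have "invertible M" by (simp add: invertible_det_nz)
  then obtain B where "B ** M = mat 1" unfolding invertible_def by blast
  then have "\<forall>x. M *v x = 0 \<longrightarrow> x = 0" using matrix_left_invertible_ker by blast
  then show False using assms by blast
qed

lemma det_pd:
  fixes M :: "real^'m::finite^'m"
  assumes "pd_mat M"
  shows "det M \<noteq> 0"
proof -
  have "\<forall>x. M *v x = 0 \<longrightarrow> x = 0" using assms unfolding pd_mat_def by force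
  then obtain B where B: "B ** M = mat 1" using matrix_left_invertible_ker by blast
  then have "M ** B = mat 1" using matrix_left_right_inverse by blast
  then have "invertible M" using B unfolding invertible_def by blast
  then show ?thesis by (simp add: invertible_det_nz)
qed

lemma ispoly_det:
  fixes M :: "real \<Rightarrow> real^'m::finite^'m"
  assumes "\<And>i j. ispoly (\<lambda>t. M t $ i $ j)"
  shows "ispoly (\<lambda>t. det (M t))"
  unfolding det_def using assms by (intro ispoly_sum ispoly_mult ispoly_prod ispoly_const) auto

lemma quad_scale:
  fixes M :: "real^'m::finite^'m"
  shows "(r *\<^sub>R u) \<bullet> (M *v (r *\<^sub>R u)) = r^2 * (u \<bullet> (M *v u))"
  by (simp add: matrix_vector_mult_scaleR power2_eq_square)

lemma sphere_bound:
  fixes M :: "real^'m::finite^'m"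
  obtains C where "\<And>v. \<bar>v \<bullet> (M *v v)\<bar> \<le> C * (norm v)^2"
proof -
  have "continuous_on (sphere 0 1) (\<lambda>v::real^'m. \<bar>v \<bullet> (M *v v)\<bar>)"
    by (intro continuous_intros continuous_on_inner continuous_on_id linear_continuous_on matrix_vector_mul_linear bounded_linear_intros) 
  then have "bounded ((\<lambda>v::real^'m. \<bar>v \<bullet> (M *v v)\<bar>) ` sphere 0 1)"
    by (intro compact_imp_bounded compact_continuous_image) auto
  then obtain C where C: "\<And>u. u \<in> sphere 0 1 \<Longrightarrow> \<bar>u \<bullet> (M *v u)\<bar> \<le> C"
    unfolding bounded_iff by fastforce
  show ?thesis
  proof (rule that)
    fix v :: "real^'m"
    show "\<bar>v \<bullet> (M *v v)\<bar> \<le> C * (norm v)^2"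
    proof (cases "v = 0")
      case False
      define u where "u = (1 / norm v) *\<^sub>R v"
      have u: "u \<in> sphere 0 1" using False by (simp add: u_def)
      have vu: "v = norm v *\<^sub>R u" using False by (simp add: u_def)
      have "\<bar>v \<bullet> (M *v v)\<bar> = (norm v)^2 * \<bar>u \<bullet> (M *v u)\<bar>"
        by (subst vu, subst vu, simp only: quad_scale abs_mult) simp
      also have "\<dots> \<le> (norm v)^2 * C" using C[OF u] by (intro mult_left_mono) auto
      finally show ?thesis by (simp add: mult.commute)
    qed simp
  qed
qed

lemma sphere_pd:
  fixes M :: "real^'m::finite^'m"
  assumes "pd_mat M"
  obtains \<mu> where "\<mu> > 0" "\<And>v. \<mu> * (norm v)^2 \<le> v \<bullet> (M *v v)"
proof -
  have ne: "sphere (0::real^'m) 1 \<noteq> {}" by simp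
  have "continuous_on (sphere 0 1) (\<lambda>v::real^'m. v \<bullet> (M *v v))"
    by (intro continuous_intros continuous_on_inner continuous_on_id linear_continuous_on matrix_vector_mul_linear bounded_linear_intros)
  then obtain u0 where u0: "u0 \<in> sphere 0 1" "\<And>u. u \<in> sphere 0 1 \<Longrightarrow> u0 \<bullet> (M *v u0) \<le> u \<bullet> (M *v u)"
    using continuous_attains_inf[OF compact_sphere ne] by blast
  have "u0 \<noteq> 0" using u0(1) by auto
  then have mpos: "0 < u0 \<bullet> (M *v u0)" using assms unfolding pd_mat_def by blast
  show ?thesis
  proof (rule that[OF mpos])
    fix v :: "real^'m"
    show "(u0 \<bullet> (M *v u0)) * (norm v)^2 \<le> v \<bullet> (M *v v)"
    proof (cases "v = 0")
      case False
      define u where "u = (1 / norm v) *\<^sub>R v"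
      have u: "u \<in> sphere 0 1" using False by (simp add: u_def)
      have vu: "v = norm v *\<^sub>R u" using False by (simp add: u_def)
      have "v \<bullet> (M *v v) = (norm v)^2 * (u \<bullet> (M *v u))"
        by (subst vu, subst vu, simp only: quad_scale)
      also have "\<dots> \<ge> (norm v)^2 * (u0 \<bullet> (M *v u0))" using u0(2)[OF u] by (intro mult_left_mono) auto
      finally show ?thesis by (simp add: mult.commute)
    qed simp
  qed
qed




lemma pd_open:
  fixes A0 :: "real^'m::finite^'m" and f :: "('n::finite \<Rightarrow> nat) \<Rightarrow> real"
  assumes char: "Pd d K = {f \<in> polyspace d. psd_mat (A0 + (\<Sum>\<alpha>\<in>mons_le d. f \<alpha> *\<^sub>R A \<alpha>))}"
    and f: "f \<in> polyspace d" "pd_mat (A0 + (\<Sum>\<alpha>\<in>mons_le d. f \<alpha> *\<^sub>R A \<alpha>))"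
  shows "f \<in> intPd d K"
proof -
  obtain \<mu> where mu: "\<mu> > 0" "\<And>v. \<mu> * (norm v)^2 \<le> v \<bullet> ((A0 + (\<Sum>\<alpha>\<in>mons_le d. f \<alpha> *\<^sub>R A \<alpha>)) *v v)"
    using sphere_pd[OF f(2)] by blast
  have "\<forall>\<alpha>. \<exists>C. \<forall>v. \<bar>v \<bullet> (A \<alpha> *v v)\<bar> \<le> C * (norm v)^2"
    using sphere_bound by metis
  then obtain C where C: "\<And>\<alpha> v. \<bar>v \<bullet> (A \<alpha> *v v)\<bar> \<le> C \<alpha> * (norm v)^2" by metis
  define Ct where "Ct = (\<Sum>\<alpha>\<in>(mons_le d :: ('n\<Rightarrow>nat) set). \<bar>C \<alpha>\<bar>)"
  have Ct0: "0 \<le> Ct" unfolding Ct_def by (intro sum_nonneg) auto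
  define \<epsilon> where "\<epsilon> = \<mu> / (Ct + 1)"
  have epos: "\<epsilon> > 0" using mu(1) Ct0 by (simp add: \<epsilon>_def)
  have key: "\<epsilon> * Ct \<le> \<mu>"
  proof -
    have "\<epsilon> * Ct = \<mu> * Ct / (Ct + 1)" by (simp add: \<epsilon>_def)
    also have "\<dots> \<le> \<mu>" using Ct0 mu(1) by (simp add: divide_le_eq)
    finally show ?thesis .
  qed
  show ?thesis
  proof (rule intPd_crit[OF f(1) epos])
    fix g assume g: "g \<in> polyspace d" "\<forall>\<alpha>\<in>mons_le d. \<bar>g \<alpha> - f \<alpha>\<bar> < \<epsilon>"
    have "0 \<le> v \<bullet> ((A0 + (\<Sum>\<alpha>\<in>mons_le d. g \<alpha> *\<^sub>R A \<alpha>)) *v v)" for v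
    proof -
      have eq: "v \<bullet> ((A0 + (\<Sum>\<alpha>\<in>mons_le d. g \<alpha> *\<^sub>R A \<alpha>)) *v v) =
        v \<bullet> ((A0 + (\<Sum>\<alpha>\<in>mons_le d. f \<alpha> *\<^sub>R A \<alpha>)) *v v) + (\<Sum>\<alpha>\<in>mons_le d. (g \<alpha> - f \<alpha>) * (v \<bullet> (A \<alpha> *v v)))"
        unfolding quad_L by (simp add: sum.distrib[symmetric] algebra_simps)
      have "\<bar>\<Sum>\<alpha>\<in>mons_le d. (g \<alpha> - f \<alpha>) * (v \<bullet> (A \<alpha> *v v))\<bar> \<le> (\<Sum>\<alpha>\<in>mons_le d. \<bar>(g \<alpha> - f \<alpha>) * (v \<bullet> (A \<alpha> *v v))\<bar>)"
        by (rule sum_abs)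
      also have "\<dots> \<le> (\<Sum>\<alpha>\<in>(mons_le d :: ('n\<Rightarrow>nat) set). \<epsilon> * (\<bar>C \<alpha>\<bar> * (norm v)^2))"
      proof (intro sum_mono)
        fix \<alpha> :: "'n \<Rightarrow> nat" assume a: "\<alpha> \<in> mons_le d"
        have "\<bar>v \<bullet> (A \<alpha> *v v)\<bar> \<le> \<bar>C \<alpha>\<bar> * (norm v)^2"
          using C[of v \<alpha>] by (meson abs_ge_self dual_order.trans mult_right_mono zero_le_power2)
        then show "\<bar>(g \<alpha> - f \<alpha>) * (v \<bullet> (A \<alpha> *v v))\<bar> \<le> \<epsilon> * (\<bar>C \<alpha>\<bar> * (norm v)^2)"
          unfolding abs_mult using g(2) a by (intro mult_mono) auto
      qed
      also have "\<dots> = \<epsilon> * Ct * (norm v)^2" by (simp add: Ct_def sum_distrib_left sum_distrib_right mult_ac)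
      also have "\<dots> \<le> \<mu> * (norm v)^2" using key by (intro mult_right_mono) auto
      finally show ?thesis using eq mu(2)[of v] by linarith
    qed
    then show "g \<in> Pd d K" using g(1) char unfolding psd_mat_def by auto
  qed
qed





lemma ispoly_at_right: assumes "ispoly q" shows "(q \<longlongrightarrow> q x) (at_right x)"
proof -
  obtain P where P: "\<And>t. q t = poly P t" using assms unfolding ispoly_def by blast
  have "((\<lambda>t. poly P t) \<longlongrightarrow> poly P x) (at_right x)"
    by (intro tendsto_poly tendsto_ident_at)
  then show ?thesis unfolding P[abs_def] by simp
qed

theorem mainTheorem14:
  fixes K :: "('n::finite \<Rightarrow> real) set" and d :: nat
  assumes "semialgebraic K" and "interior K \<noteq> {}"
    and "even d" and "d > 2"
  shows "\<not> (\<exists>\<phi>. poly_fun \<phi> \<and> (\<forall>f\<in>intPd d K. 0 < \<phi> f) \<and> (\<forall>f\<in>bdPd d K. \<phi> f = 0))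
    \<and> \<not> (\<exists>\<phi>. poly_fun \<phi> \<and> (\<forall>f\<in>intPd d K. 0 < \<phi> f) \<and>
              (\<forall>f\<in>bdPd d K. filterlim (\<lambda>g. - ln (\<phi> g)) at_top (at f within intPd d K)))
    \<and> \<not> (\<exists>(A0 :: real^'m::finite^'m) A.
              transpose A0 = A0 \<and> (\<forall>\<alpha>\<in>mons_le d. transpose (A \<alpha>) = A \<alpha>) \<and>
              Pd d K = {f \<in> polyspace d. psd_mat (A0 + (\<Sum>\<alpha>\<in>mons_le d. f \<alpha> *\<^sub>R A \<alpha>))} \<and>
              (\<forall>f\<in>intPd d K. pd_mat (A0 + (\<Sum>\<alpha>\<in>mons_le d. f \<alpha> *\<^sub>R A \<alpha>))))"
proof -
  obtain p where p: "p \<in> interior K" using assms(2) by blast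
  define i0 :: 'n where "i0 = undefined"
  obtain \<delta> where \<delta>: "\<delta> > 0" "\<And>s. \<bar>s\<bar> < \<delta> \<Longrightarrow> p(i0 := p i0 + s) \<in> K"
    using interior_line[OF p] by blast
  have d4: "4 \<le> d" using assms(3,4) by (auto elim!: evenE)
  obtain c where c: "\<And>t. c t \<in> polyspace d" "\<And>\<alpha>. ispoly (\<lambda>t. c t \<alpha>)"
    "\<And>t x. peval d (c t) x = (Sd p x - t)^2 * (1 + Sd p x)^(d div 2 - 2)"
    using curve[OF assms(3) d4, of p] by blast
  define D where "D = d div 2"
  have DD: "2 + (D - 2) = D" using d4 by (simp add: D_def)
  have cPd: "c t \<in> Pd d K" for t
    using c(1) Sd_nonneg[of p] by (auto simp: Pd_def c(3))
  have cbd: "c t \<in> bdPd d K" if t: "t \<in> {0<..<\<delta>^2}" for t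
  proof -
    define z where "z = p(i0 := p i0 + sqrt t)"
    have "sqrt t < sqrt (\<delta>^2)" using t by (intro real_sqrt_less_mono) auto
    then have "\<bar>sqrt t\<bar> < \<delta>" using \<delta>(1) t by simp
    then have zK: "z \<in> K" unfolding z_def by (rule \<delta>(2))
    have "Sd p z = t" unfolding z_def Sd_line using t by simp
    then have "peval d (c t) z = 0" by (simp add: c(3))
    then show ?thesis by (rule bdPd_crit[OF cPd zK])
  qed
  have peval_e: "peval d (c (-1)) x = (1 + Sd p x)^D" for x
  proof -
    have "peval d (c (-1)) x = (1 + Sd p x)^2 * (1 + Sd p x)^(D - 2)"
      by (simp add: c(3) D_def add.commute)
    also have "\<dots> = (1 + Sd p x)^(2 + (D - 2))" by (simp only: power_add)
    also have "\<dots> = (1 + Sd p x)^D" by (simp only: DD)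
    finally show ?thesis .
  qed
  have cint: "c (-1) \<in> intPd d K"
  proof (rule intPd_growth[where m=1 and p=p])
    show "c (-1) \<in> polyspace d" by (rule c(1))
    fix x show "1 * (1 + Sd p x) ^ (d div 2) \<le> peval d (c (-1)) x"
      unfolding peval_e by (simp add: D_def)
  qed (use assms(3) in auto)
  have inf: "infinite {0<..<\<delta>^2}" using \<delta>(1) by simp
  have core: "\<phi> (c (-1)) = 0" if "poly_fun \<phi>" "\<And>t. t \<in> {0<..<\<delta>^2} \<Longrightarrow> \<phi> (c t) = 0" for \<phi>
    using ispoly_zero_on_infinite[OF polyfun_curve[OF that(1) c(2)] inf that(2)] by simp

  have P1: "\<not> (\<exists>\<phi>. poly_fun \<phi> \<and> (\<forall>f\<in>intPd d K. 0 < \<phi> f) \<and> (\<forall>f\<in>bdPd d K. \<phi> f = 0))"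
  proof
    assume "\<exists>\<phi>. poly_fun \<phi> \<and> (\<forall>f\<in>intPd d K. 0 < \<phi> f) \<and> (\<forall>f\<in>bdPd d K. \<phi> f = 0)"
    then obtain \<phi> where \<phi>: "poly_fun \<phi>" "\<forall>f\<in>intPd d K. 0 < \<phi> f" "\<forall>f\<in>bdPd d K. \<phi> f = 0" by blast
    have "\<phi> (c (-1)) = 0" using core[OF \<phi>(1)] \<phi>(3) cbd by blast
    then show False using \<phi>(2) cint by force
  qed

  have P2: "\<not> (\<exists>\<phi>. poly_fun \<phi> \<and> (\<forall>f\<in>intPd d K. 0 < \<phi> f) \<and>
              (\<forall>f\<in>bdPd d K. filterlim (\<lambda>g. - ln (\<phi> g)) at_top (at f within intPd d K)))"
  proof
    assume "\<exists>\<phi>. poly_fun \<phi> \<and> (\<forall>f\<in>intPd d K. 0 < \<phi> f) \<and>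
              (\<forall>f\<in>bdPd d K. filterlim (\<lambda>g. - ln (\<phi> g)) at_top (at f within intPd d K))"
    then obtain \<phi> where \<phi>: "poly_fun \<phi>" "\<forall>f\<in>intPd d K. 0 < \<phi> f"
      "\<forall>f\<in>bdPd d K. filterlim (\<lambda>g. - ln (\<phi> g)) at_top (at f within intPd d K)" by blast
    have zero: "\<phi> (c t) = 0" if t: "t \<in> {0<..<\<delta>^2}" for t
    proof -
      define f where "f = c t"
      define e where "e = c (-1)"
      define \<gamma> where "\<gamma> s = (\<lambda>\<alpha>. f \<alpha> + s * e \<alpha>)" for s :: real
      have peval_g: "peval d (\<gamma> s) x = peval d f x + s * peval d e x" for s x
        unfolding peval_mon \<gamma>_def by (simp add: sum.distrib sum_distrib_left algebra_simps)
      have gint: "\<gamma> s \<in> intPd d K" if s: "s > 0" for s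
      proof (rule intPd_growth[OF assms(3) _ s, of _ p])
        show "\<gamma> s \<in> polyspace d" using c(1)[of t] c(1)[of "-1"]
          by (auto simp: polyspace_def \<gamma>_def f_def e_def)
        fix x
        have "0 \<le> peval d f x" using cPd[of t] by (auto simp: f_def Pd_def c(3) Sd_nonneg)
        then show "s * (1 + Sd p x) ^ (d div 2) \<le> peval d (\<gamma> s) x"
          unfolding peval_g e_def peval_e D_def by simp
      qed
      have gne: "\<gamma> s \<noteq> f" if s: "s > 0" for s
      proof
        assume "\<gamma> s = f"
        then have "peval d (\<gamma> s) p = peval d f p" by simp
        moreover have "peval d e p = 1" unfolding e_def peval_e by (simp add: Sd_def)
        ultimately show False using s unfolding peval_g by simp
      qed
      have "continuous_on UNIV \<gamma>" unfolding \<gamma>_def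
        by (intro continuous_on_coordinatewise_then_product continuous_intros)
      then have "isCont \<gamma> 0" by (simp add: continuous_on_eq_continuous_at)
      then have "(\<gamma> \<longlongrightarrow> \<gamma> 0) (at 0)" by (simp add: isCont_def)
      moreover have "\<gamma> 0 = f" by (rule ext) (simp add: \<gamma>_def)
      ultimately have gt: "(\<gamma> \<longlongrightarrow> f) (at_right 0)" 
        using tendsto_within_subset[of \<gamma> "nhds f" 0 UNIV "{0<..}"] by simp
      have ev: "eventually (\<lambda>s. \<gamma> s \<in> intPd d K - {f}) (at_right (0::real))"
        using eventually_at_right_less[of "0::real"] by eventually_elim (use gint gne in auto)
      have gf: "filterlim \<gamma> (at f within intPd d K) (at_right 0)"
        by (rule filterlim_at_withinI[OF gt ev])
      have lim: "filterlim (\<lambda>s. - ln (\<phi> (\<gamma> s))) at_top (at_right 0)"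
        using filterlim_compose[OF \<phi>(3)[rule_format, OF cbd[OF t, folded f_def]] gf] by simp
      define q where "q s = \<phi> (\<gamma> s)" for s
      have "ispoly q" unfolding q_def
        by (rule polyfun_curve[OF \<phi>(1)]) (auto simp: \<gamma>_def intro!: ispoly_add ispoly_mult)
      then have qt: "(q \<longlongrightarrow> q 0) (at_right 0)" by (rule ispoly_at_right)
      have q0: "q 0 = \<phi> f" by (simp add: q_def \<open>\<gamma> 0 = f\<close>)
      have qpos: "eventually (\<lambda>s. q s > 0) (at_right (0::real))"
        using eventually_at_right_less[of "0::real"] by eventually_elim (use gint \<phi>(2) in \<open>auto simp: q_def\<close>)
      have nb: "at_right (0::real) \<noteq> bot" using trivial_limit_at_right_real by blast
      show ?thesis
      proof (cases "q 0 > 0")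
        case True
        have "((\<lambda>s. - ln (q s)) \<longlongrightarrow> - ln (q 0)) (at_right 0)"
          by (intro tendsto_minus tendsto_ln qt) (use True in simp)
        moreover have "filterlim (\<lambda>s. - ln (q s)) at_infinity (at_right 0)"
          using filterlim_at_top_imp_at_infinity[OF lim] by (simp add: q_def)
        ultimately have False using not_tendsto_and_filterlim_at_infinity[OF nb] by blast
        then show ?thesis ..
      next
        case False
        show ?thesis
        proof (rule ccontr)
          assume "\<phi> (c t) \<noteq> 0"
          then have "q 0 < 0" using False q0 f_def by simp
          then have "eventually (\<lambda>s. q s < 0) (at_right (0::real))" using order_tendstoD(2)[OF qt] by blast
          with qpos have "eventually (\<lambda>s. False) (at_right (0::real))" by eventually_elim simp
          then show False using nb by (simp add: eventually_False)
        qed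
      qed
    qed
    have "\<phi> (c (-1)) = 0" using core[OF \<phi>(1)] zero by blast
    then show False using \<phi>(2) cint by force
  qed

  have P3: "\<not> (\<exists>(A0 :: real^'m::finite^'m) A.
              transpose A0 = A0 \<and> (\<forall>\<alpha>\<in>mons_le d. transpose (A \<alpha>) = A \<alpha>) \<and>
              Pd d K = {f \<in> polyspace d. psd_mat (A0 + (\<Sum>\<alpha>\<in>mons_le d. f \<alpha> *\<^sub>R A \<alpha>))} \<and>
              (\<forall>f\<in>intPd d K. pd_mat (A0 + (\<Sum>\<alpha>\<in>mons_le d. f \<alpha> *\<^sub>R A \<alpha>))))"
  proof
    assume "\<exists>(A0 :: real^'m::finite^'m) A.
              transpose A0 = A0 \<and> (\<forall>\<alpha>\<in>mons_le d. transpose (A \<alpha>) = A \<alpha>) \<and>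
              Pd d K = {f \<in> polyspace d. psd_mat (A0 + (\<Sum>\<alpha>\<in>mons_le d. f \<alpha> *\<^sub>R A \<alpha>))} \<and>
              (\<forall>f\<in>intPd d K. pd_mat (A0 + (\<Sum>\<alpha>\<in>mons_le d. f \<alpha> *\<^sub>R A \<alpha>)))"
    then obtain A0 :: "real^'m^'m" and A where
      A: "transpose A0 = A0" "\<forall>\<alpha>\<in>mons_le d. transpose (A \<alpha>) = A \<alpha>"
      "Pd d K = {f \<in> polyspace d. psd_mat (A0 + (\<Sum>\<alpha>\<in>mons_le d. f \<alpha> *\<^sub>R A \<alpha>))}"
      "\<forall>f\<in>intPd d K. pd_mat (A0 + (\<Sum>\<alpha>\<in>mons_le d. f \<alpha> *\<^sub>R A \<alpha>))" by blast
    define L where "L f = A0 + (\<Sum>\<alpha>\<in>mons_le d. f \<alpha> *\<^sub>R A \<alpha>)" for f :: "('n \<Rightarrow> nat) \<Rightarrow> real"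
    have dz: "det (L (c t)) = 0" if t: "t \<in> {0<..<\<delta>^2}" for t
    proof -
      have "c t \<notin> intPd d K" using cbd[OF t] unfolding bdPd_def intPd_def frontier_of_def by blast
      then have "\<not> pd_mat (L (c t))" using pd_open[OF A(3) c(1)] unfolding L_def by blast
      then obtain v where v: "v \<noteq> 0" "\<not> 0 < v \<bullet> (L (c t) *v v)" unfolding pd_mat_def by blast
      have "psd_mat (L (c t))" using cPd[of t] A(3) unfolding L_def by blast
      then have "0 \<le> v \<bullet> (L (c t) *v v)" unfolding psd_mat_def by blast
      then have "v \<bullet> (L (c t) *v v) = 0" using v(2) by linarith
      then have "L (c t) *v v = 0"
        by (intro psd_kernel \<open>psd_mat (L (c t))\<close>) (simp_all add: L_def sym_L[OF A(1,2)])
      then show ?thesis using det_zero_kernel v(1) by blast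
    qed
    have "ispoly (\<lambda>t. det (L (c t)))"
    proof (rule ispoly_det)
      fix i j
      show "ispoly (\<lambda>t. L (c t) $ i $ j)" unfolding L_def entry_L
        using c(2) by (intro ispoly_add ispoly_const ispoly_sum ispoly_mult) auto
    qed
    then have "det (L (c (-1))) = 0" using ispoly_zero_on_infinite[OF _ inf] dz by blast
    moreover have "det (L (c (-1))) \<noteq> 0" using A(4) cint det_pd unfolding L_def by blast
    ultimately show False by simp
  qed
  show ?thesis using P1 P2 P3 by blast
qed


end
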